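(* Let $\mathcal{G}$ be the Lie group of $3\times 3$ pairwise comparisons matrices, $$\mathcal{G}=\left\{\begin{pmatrix} 1 & m_{12} & m_{13} \\ \frac{1}{m_{12}} & 1 & m_{23} \\ \frac{1}{m_{13}} & \frac{1}{m_{23}} & 1\end{pmatrix} : m_{12},m_{13},m_{23}\in\mathbb{R}^+\right\},$$ with the Hadamard (entrywise) product. Let $$H=\left\{\begin{pmatrix} 1 & k & \frac1k \\ \frac1k & 1 & k \\ k & \frac1k & 1\end{pmatrix} : k\in\mathbb{R}^+\right\},\qquad L=\left\{\begin{pmatrix} 1 & y & yz \\ \frac1y & 1 & z \\ \frac{1}{yz} & \frac1z & 1\end{pmatrix} : y,z\in\mathbb{R}^+\right\}.$$ Then: (i) $H$ and $L$ are normal subgroups of the Lie group $\mathcal{G}$; (ii) $\mathcal{G}$ is the internal direct product of the normal Lie subgroups $H$ and $L$; in particular $\mathcal{G}\simeq H\times L$.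
   Context: The Hadamard product is $M\cdot N=[m_{ij}n_{ij}]$, with identity the all-ones matrix $e$. A group $\mathcal{G}$ is the internal direct product of normal subgroups $N_1,\dots,N_n$ if $\mathcal{G}=N_1N_2\cdots N_n$ and $N_i\cap(N_1\cdots N_{i-1}N_{i+1}\cdots N_n)=\{e\}$ for every $i$. *)

theory Defs
  imports "HOL-Analysis.Analysis" "HOL-Algebra.Algebra"
begin

type_synonym mat3 = "real^3^3"

definition hadamard :: "mat3 \<Rightarrow> mat3 \<Rightarrow> mat3" where
  "hadamard M N = (\<chi> i j. M $ i $ j * N $ i $ j)"

definition ones3 :: mat3 where
  "ones3 = (\<chi> i j. 1)"

definition pcm3 :: "real \<Rightarrow> real \<Rightarrow> real \<Rightarrow> mat3" where
  "pcm3 a b c = vector [vector [1, a, b], vector [1/a, 1, c], vector [1/b, 1/c, 1]]"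

definition PC3 :: "mat3 monoid" where
  "PC3 = \<lparr> carrier = {pcm3 a b c | a b c. a > 0 \<and> b > 0 \<and> c > 0},
           mult = hadamard, one = ones3 \<rparr>"

definition H3 :: "mat3 set" where
  "H3 = {pcm3 k (1/k) k | k. k > 0}"

definition L3 :: "mat3 set" where
  "L3 = {pcm3 y (y*z) z | y z. y > 0 \<and> z > 0}"

text \<open>Internal direct product of two normal subgroups, as in the paper's definition with n = 2.\<close>
definition internal_direct_product2 :: "('a, 'b) monoid_scheme \<Rightarrow> 'a set \<Rightarrow> 'a set \<Rightarrow> bool" where
  "internal_direct_product2 G N1 N2 \<longleftrightarrow>
     N1 \<lhd> G \<and> N2 \<lhd> G \<and> carrier G = N1 <#>\<^bsub>G\<^esub> N2 \<and>
     N1 \<inter> N2 = {\<one>\<^bsub>G\<^esub>} \<and> N2 \<inter> N1 = {\<one>\<^bsub>G\<^esub>}"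

end

theory Submission
  imports Defs
begin

lemma pcm3_entries:
  "pcm3 a b c $ 1 $ 1 = 1" "pcm3 a b c $ 1 $ 2 = a" "pcm3 a b c $ 1 $ 3 = b"
  "pcm3 a b c $ 2 $ 1 = 1/a" "pcm3 a b c $ 2 $ 2 = 1" "pcm3 a b c $ 2 $ 3 = c"
  "pcm3 a b c $ 3 $ 1 = 1/b" "pcm3 a b c $ 3 $ 2 = 1/c" "pcm3 a b c $ 3 $ 3 = 1"
  by (simp_all add: pcm3_def vector_def)

lemma mat3_eqI:
  fixes M N :: mat3
  assumes "\<And>i j. M $ i $ j = N $ i $ j"
  shows "M = N"
  using assms by (simp add: vec_eq_iff)

lemma pcm3_eq_iff: "pcm3 a b c = pcm3 a2 b2 c2 \<longleftrightarrow> a = a2 \<and> b = b2 \<and> c = c2"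
  by (metis pcm3_entries(2,3,6))

lemma hadamard_pcm3: "hadamard (pcm3 a b c) (pcm3 a2 b2 c2) = pcm3 (a*a2) (b*b2) ( c * c2)"
  by (simp add: vec_eq_iff forall_3 hadamard_def pcm3_entries)

lemma ones3_pcm3: "ones3 = pcm3 1 1 1"
  by (simp add: vec_eq_iff forall_3 ones3_def pcm3_entries)

declare pcm3_eq_iff [simp]

lemma carrier_PC3: "carrier PC3 = {pcm3 a b c | a b c. a > 0 \<and> b > 0 \<and> c > 0}"
  by (simp add: PC3_def)

lemma mult_PC3: "x \<otimes>\<^bsub>PC3\<^esub> y = hadamard x y" by (simp add: PC3_def)
lemma one_PC3: "\<one>\<^bsub>PC3\<^esub> = pcm3 1 1 1" by (simp add: PC3_def ones3_pcm3)

lemma comm_group_PC3: "comm_group PC3"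
proof (rule comm_groupI)
  fix x y assume "x \<in> carrier PC3" "y \<in> carrier PC3"
  then show "x \<otimes>\<^bsub>PC3\<^esub> y \<in> carrier PC3"
    by (auto simp: carrier_PC3 mult_PC3 hadamard_pcm3)
next
  show "\<one>\<^bsub>PC3\<^esub> \<in> carrier PC3" by (auto simp: carrier_PC3 one_PC3)
next
  fix x y z assume "x \<in> carrier PC3" "y \<in> carrier PC3" "z \<in> carrier PC3"
  then show "x \<otimes>\<^bsub>PC3\<^esub> y \<otimes>\<^bsub>PC3\<^esub> z = x \<otimes>\<^bsub>PC3\<^esub> (y \<otimes>\<^bsub>PC3\<^esub> z)"
    by (auto simp: carrier_PC3 mult_PC3 hadamard_pcm3 mult.assoc)
next
  fix x y assume "x \<in> carrier PC3" "y \<in> carrier PC3"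
  then show "x \<otimes>\<^bsub>PC3\<^esub> y = y \<otimes>\<^bsub>PC3\<^esub> x"
    by (auto simp: carrier_PC3 mult_PC3 hadamard_pcm3 mult.commute)
next
  fix x assume "x \<in> carrier PC3"
  then show "\<one>\<^bsub>PC3\<^esub> \<otimes>\<^bsub>PC3\<^esub> x = x"
    by (auto simp: carrier_PC3 mult_PC3 one_PC3 hadamard_pcm3)
next
  fix x assume "x \<in> carrier PC3"
  then obtain a b c where x: "x = pcm3 a b c" "a > 0" "b > 0" "c > 0"
    by (auto simp: carrier_PC3)
  show "\<exists>y\<in>carrier PC3. y \<otimes>\<^bsub>PC3\<^esub> x = \<one>\<^bsub>PC3\<^esub>"
    by (rule bexI[of _ "pcm3 (1/a) (1/b) (1/c)"])
       (use x in \<open>auto simp: carrier_PC3 mult_PC3 one_PC3 hadamard_pcm3\<close>)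
qed

interpretation PC: comm_group PC3 by (rule comm_group_PC3)

lemma inv_PC3: "a > 0 \<Longrightarrow> b > 0 \<Longrightarrow> c > 0 \<Longrightarrow> inv\<^bsub>PC3\<^esub> (pcm3 a b c) = pcm3 (1/a) (1/b) (1/c)"
  by (rule PC.inv_equality) (auto simp: carrier_PC3 mult_PC3 one_PC3 hadamard_pcm3)

lemma sub_H3: "subgroup H3 PC3"
proof (rule PC.subgroupI)
  show "H3 \<subseteq> carrier PC3" by (auto simp: H3_def carrier_PC3)
  have "pcm3 1 (1/1) 1 \<in> H3" unfolding H3_def by force
  then show "H3 \<noteq> {}" by blast
next
  fix x assume "x \<in> H3"
  then obtain k where "x = pcm3 k (1/k) k" "k > 0" by (auto simp: H3_def)
  then show "inv\<^bsub>PC3\<^esub> x \<in> H3"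
    by (auto simp: H3_def inv_PC3 intro!: exI[of _ "1/k"])
next
  fix x y assume "x \<in> H3" "y \<in> H3"
  then obtain k l where "x = pcm3 k (1/k) k" "k > 0" "y = pcm3 l (1/l) l" "l > 0"
    by (auto simp: H3_def)
  then show "x \<otimes>\<^bsub>PC3\<^esub> y \<in> H3"
    by (auto simp: H3_def mult_PC3 hadamard_pcm3 intro!: exI[of _ "k*l"])
qed

lemma sub_L3: "subgroup L3 PC3"
proof (rule PC.subgroupI)
  show "L3 \<subseteq> carrier PC3" by (auto simp: L3_def carrier_PC3)
  have "pcm3 1 (1*1) 1 \<in> L3" unfolding L3_def by force
  then show "L3 \<noteq> {}" by blast
next
  fix x assume "x \<in> L3"
  then obtain y z where "x = pcm3 y (y*z) z" "y > 0" "z > 0" by (auto simp: L3_def)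
  then show "inv\<^bsub>PC3\<^esub> x \<in> L3"
    by (auto simp: L3_def inv_PC3 intro!: exI[of _ "1/y"] exI[of _ "1/z"])
next
  fix x x' assume "x \<in> L3" "x' \<in> L3"
  then obtain y z y' z' where "x = pcm3 y (y*z) z" "y > 0" "z > 0"
     "x' = pcm3 y' (y'*z') z'" "y' > 0" "z' > 0"
    by (auto simp: L3_def)
  then show "x \<otimes>\<^bsub>PC3\<^esub> x' \<in> L3"
    by (auto simp: L3_def mult_PC3 hadamard_pcm3 intro!: exI[of _ "y*y'"] exI[of _ "z*z'"])
qed

lemma inter_HL: "H3 \<inter> L3 = {\<one>\<^bsub>PC3\<^esub>}"
proof
  show "{\<one>\<^bsub>PC3\<^esub>} \<subseteq> H3 \<inter> L3"
    using sub_H3 sub_L3 subgroup.one_closed by blast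
  show "H3 \<inter> L3 \<subseteq> {\<one>\<^bsub>PC3\<^esub>}"
  proof
    fix x assume "x \<in> H3 \<inter> L3"
    then obtain k y z where x: "x = pcm3 k (1/k) k" "k > 0" "x = pcm3 y (y*z) z" "y > 0" "z > 0"
      by (auto simp: H3_def L3_def)
    then have "k = y" "1/k = y*z" "k = z" by (auto simp: pcm3_eq_iff)
    then have "k^3 = 1" using x(2) by (auto simp: field_simps power3_eq_cube)
    then have "k = 1" using x(2) by (metis less_imp_le power_eq_iff_eq_base power_one zero_less_numeral zero_le_one)
    then show "x \<in> {\<one>\<^bsub>PC3\<^esub>}" using x by (simp add: one_PC3)
  qed
qed

lemma prod_HL: "H3 <#>\<^bsub>PC3\<^esub> L3 = carrier PC3"
proof
  show "H3 <#>\<^bsub>PC3\<^esub> L3 \<subseteq> carrier PC3"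
    using sub_H3 sub_L3 by (simp add: PC.set_mult_closed subgroup.subset)
  show "carrier PC3 \<subseteq> H3 <#>\<^bsub>PC3\<^esub> L3"
  proof
    fix x assume "x \<in> carrier PC3"
    then obtain a b c where x: "x = pcm3 a b c" "a > 0" "b > 0" "c > 0"
      by (auto simp: carrier_PC3)
    define k where "k = root 3 (a * c / b)"
    have k: "k > 0" "k^3 = a * c / b" using x by (auto simp: k_def)
    define y where "y = a/k"
    define z where "z = c/k"
    have "x = hadamard (pcm3 k (1/k) k) (pcm3 y (y*z) z)"
      using x k unfolding hadamard_pcm3 y_def z_def
      by (auto simp: pcm3_eq_iff field_simps power3_eq_cube)
    moreover have "pcm3 k (1/k) k \<in> H3" using k by (auto simp: H3_def)
    moreover have "pcm3 y (y*z) z \<in> L3" using k x by (auto simp: L3_def y_def z_def)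
    ultimately show "x \<in> H3 <#>\<^bsub>PC3\<^esub> L3"
      by (auto simp: set_mult_def mult_PC3)
  qed
qed

theorem mainTheorem6:
  shows "H3 \<lhd> PC3 \<and> L3 \<lhd> PC3 \<and> internal_direct_product2 PC3 H3 L3 \<and>
         PC3 \<cong> DirProd (subgroup_generated PC3 H3) (subgroup_generated PC3 L3)"
proof -
  have nH: "H3 \<lhd> PC3" and nL: "L3 \<lhd> PC3"
    using sub_H3 sub_L3 PC.subgroup_imp_normal by auto
  have "internal_direct_product2 PC3 H3 L3"
    using nH nL inter_HL prod_HL by (auto simp: internal_direct_product2_def)
  moreover have "(\<lambda>(x,y). x \<otimes>\<^bsub>PC3\<^esub> y) \<in> iso (DirProd (subgroup_generated PC3 H3) (subgroup_generated PC3 L3)) PC3"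
  proof -
    interpret group_disjoint_sum PC3 H3 L3
      using sub_H3 sub_L3 by (auto simp: group_disjoint_sum_def PC.group_axioms)
    show ?thesis
      using iso_group_mul[OF comm_group_PC3] inter_HL prod_HL by auto
  qed
  then have "DirProd (subgroup_generated PC3 H3) (subgroup_generated PC3 L3) \<cong> PC3"
    unfolding is_iso_def by blast
  then have "PC3 \<cong> DirProd (subgroup_generated PC3 H3) (subgroup_generated PC3 L3)"
    by (rule group.iso_sym[rotated]) (simp add: DirProd_group PC.group_subgroup_generated)
  ultimately show ?thesis using nH nL by blast
qed

end
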